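(* Let $q\equiv 3 \pmod 4$ be a prime power. In $G=\mathbb{Z}_2\times(\mathbb{F}_{q^2},+)$ define $B_0=(\{0\}\times D_0)\cup(\{1\}\times(\mathbb{F}_{q^2}\setminus D_0))$ and $B_1=(\{0\}\times D_2)\cup(\{1\}\times D_2)$. Then $|B_0|=q^2$, $|B_1|=q^2-1$, and in the group ring $\mathbb{Z}[G]$, $$\sum_{i=0,1}B_iB_i^{(-1)}=\{0\}\times\Big((q^2-2)\,\mathbb{F}_{q^2}^\ast+(2q^2-1)\cdot 0_{\mathbb{F}_{q^2}}\Big)+\{1\}\times\Big(2D_0-2D_2+(q^2-1)\,\mathbb{F}_{q^2}\Big).$$
   Context: Let $\omega$ be a primitive element of $\mathbb{F}_{q^2}$. For a positive divisor $N$ of $q^2-1$, the $N$-th cyclotomic classes are $C_i^{(N,q^2)}=\omega^i\langle\omega^N\rangle$ (index $i$ taken mod $N$). Set $D_i=C_i^{(4,q^2)}\cup C_{i+1}^{(4,q^2)}$ for $i=0,1,2,3$. For an additive abelian group $G$, a subset $X\subseteq G$ is identified with the group ring element $\sum_{x\in X}x\in\mathbb{Z}[G]$; $X^{(-1)}=\{-x:x\in X\}$; $G^\ast=G\setminus\{0_G\}$. For $X\in\mathbb{Z}[\mathbb{F}_{q^2}]$ and $\epsilon\in\mathbb{Z}_2$, $\{\epsilon\}\times X$ denotes the element of $\mathbb{Z}[\mathbb{Z}_2\times\mathbb{F}_{q^2}]$ obtained by replacing each $x$ with $(\epsilon,x)$ (coefficients kept), and $c\cdot 0_{\mathbb{F}_{q^2}}$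 denotes $c$ times the identity element. *)

theory Defs
  imports Main "HOL-Library.Z2" "HOL-Library.Product_Plus" "HOL-Library.Function_Algebras" "HOL-Number_Theory.Prime_Powers"
begin

text \<open>The two-element group Z_2 is modelled by the field type bit (HOL-Library.Z2).\<close>

instance bit :: finite
proof
  have "(UNIV :: bit set) = {0, 1}" by (auto intro: bit.exhaust)
  then show "finite (UNIV :: bit set)" by (metis finite.emptyI finite.insertI)
qed

definition primitive_element :: "'a::field \<Rightarrow> bool" where
  "primitive_element w \<longleftrightarrow> w \<noteq> 0 \<and> range (\<lambda>k::nat. w ^ k) = UNIV - {0}"

definition cyc_class :: "nat \<Rightarrow> 'a::field \<Rightarrow> nat \<Rightarrow> 'a set" where
  "cyc_class N w i = {w ^ i * (w ^ N) ^ k | k. True}"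

definition Dset :: "'a::field \<Rightarrow> nat \<Rightarrow> 'a set" where
  "Dset w i = cyc_class 4 w (i mod 4) \<union> cyc_class 4 w ((i + 1) mod 4)"

text \<open>Group ring Z[G]: integer-valued coefficient functions on G.\<close>
type_synonym 'g grpring = "'g \<Rightarrow> int"

definition gr_set :: "'g set \<Rightarrow> 'g grpring" where
  "gr_set X = (\<lambda>g. if g \<in> X then 1 else 0)"

definition gr_mult :: "'g::{ab_group_add,finite} grpring \<Rightarrow> 'g grpring \<Rightarrow> 'g grpring" where
  "gr_mult X Y = (\<lambda>g. \<Sum>h\<in>UNIV. X h * Y (g - h))"

definition set_inv :: "'g::ab_group_add set \<Rightarrow> 'g set" where
  "set_inv X = uminus ` X"

definition gr_smult :: "int \<Rightarrow> 'g grpring \<Rightarrow> 'g grpring" where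
  "gr_smult c X = (\<lambda>g. c * X g)"

text \<open>{e} \<times> X : embed an element of Z[F] into Z[Z_2 \<times> F].\<close>
definition gr_lift :: "bit \<Rightarrow> 'a grpring \<Rightarrow> (bit \<times> 'a) grpring" where
  "gr_lift e X = (\<lambda>(e', x). if e' = e then X x else 0)"

end

theory Submission
  imports Defs
begin

lemma of_nat_card_zero: "of_nat (card (UNIV :: 'a::{ring_1,finite} set)) = (0::'a)"
proof -
  have "bij_betw (\<lambda>y. y + 1) (UNIV::'a set) UNIV" by (rule bij_betwI[where g="\<lambda>y. y - 1"]) auto
  hence "(\<Sum>y\<in>UNIV. y + 1) = (\<Sum>y\<in>(UNIV::'a set). y)" by (rule sum.reindex_bij_betw)
  hence "(\<Sum>y\<in>(UNIV::'a set). y) + of_nat (card (UNIV::'a set)) = (\<Sum>y\<in>UNIV. y)"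
    by (simp add: sum.distrib)
  then show ?thesis by simp
qed

lemma CHAR_dvd_card: "CHAR('a::{ring_1,finite}) dvd card (UNIV :: 'a set)"
  using of_nat_card_zero[where 'a='a] of_nat_eq_0_iff_char_dvd by blast


lemma card_mod_count:
  assumes "R \<subseteq> {..<m}"
  shows "card {i. i < m*s \<and> i mod m \<in> R} = s * card R"
proof (induction s)
  case 0 then show ?case by simp
next
  case (Suc s)
  have fR: "finite R" using assms finite_subset by blast
  have eq: "{i. i < m*Suc s \<and> i mod m \<in> R} = {i. i < m*s \<and> i mod m \<in> R} \<union> (\<lambda>r. m*s + r) ` R"
  proof (intro equalityI subsetI)
    fix i assume "i \<in> {i. i < m*Suc s \<and> i mod m \<in> R}"
    hence i: "i < m*s + m" "i mod m \<in> R" by auto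
    show "i \<in> {i. i < m*s \<and> i mod m \<in> R} \<union> (\<lambda>r. m*s + r) ` R"
    proof (cases "i < m*s")
      case True then show ?thesis using i by auto
    next
      case False
      hence "i = m*s + (i - m*s)" by auto
      moreover have "i - m*s < m" using False i by auto
      moreover have "(m*s + (i - m*s)) mod m = i - m*s" using \<open>i - m*s < m\<close> by simp
      ultimately show ?thesis using i by (metis UnI2 image_eqI)
    qed
  next
    fix i assume "i \<in> {i. i < m*s \<and> i mod m \<in> R} \<union> (\<lambda>r. m*s + r) ` R"
    then show "i \<in> {i. i < m*Suc s \<and> i mod m \<in> R}"
    proof
      assume "i \<in> {i. i < m*s \<and> i mod m \<in> R}" then show ?thesis by auto
    next
      assume "i \<in> (\<lambda>r. m*s + r) ` R"
      then obtain r where r: "r \<in> R" "i = m*s + r" by auto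
      have "r < m" using r assms by auto
      then show ?thesis using r by auto
    qed
  qed
  have disj: "{i. i < m*s \<and> i mod m \<in> R} \<inter> (\<lambda>r. m*s + r) ` R = {}" by auto
  have "card ((\<lambda>r. m*s + r) ` R) = card R" by (rule card_image) (auto simp: inj_on_def)
  then show ?case using Suc eq disj fR by (simp add: card_Un_disjoint)
qed

lemma card_offdiag:
  assumes "finite T"
  shows "card {p. fst p \<in> T \<and> snd p \<in> T \<and> fst p \<noteq> snd p} = card T * card T - card T"
proof -
  have eq: "T \<times> T = {p. fst p \<in> T \<and> snd p \<in> T \<and> fst p \<noteq> snd p} \<union> (\<lambda>t. (t,t)) ` T" by auto
  have d: "{p. fst p \<in> T \<and> snd p \<in> T \<and> fst p \<noteq> snd p} \<inter> (\<lambda>t. (t,t)) ` T = {}" by auto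
  have f: "finite {p. fst p \<in> T \<and> snd p \<in> T \<and> fst p \<noteq> snd p}"
    by (rule finite_subset[of _ "T \<times> T"]) (use assms in auto)
  have c: "card ((\<lambda>t. (t,t)) ` T) = card T" by (rule card_image) (auto simp: inj_on_def)
  have "card (T \<times> T) = card {p. fst p \<in> T \<and> snd p \<in> T \<and> fst p \<noteq> snd p} + card T"
    unfolding eq using card_Un_disjoint[OF f _ d] assms c by simp
  hence "card T * card T = card {p. fst p \<in> T \<and> snd p \<in> T \<and> fst p \<noteq> snd p} + card T"
    by (simp add: card_cartesian_product)
  then show ?thesis by simp
qed

locale ctx =
  fixes q :: nat and w :: "'a::{field,finite}"
  assumes pp: "primepow q" and q3: "q mod 4 = 3" and cardF: "card (UNIV :: 'a set) = q ^ 2"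
    and prim: "primitive_element w"
begin

lemma frob: "(x + y :: 'a) ^ q = x ^ q + y ^ q"
proof -
  obtain p k where pk: "prime p" "k > 0" "q = p ^ k" using pp by (auto simp: primepow_def)
  have cpos: "CHAR('a) > 0" by (rule finite_imp_CHAR_pos) simp
  have cpr: "prime CHAR('a)" using prime_CHAR_semidom[OF cpos] .
  have "(p^k)^2 = p ^ (k*2)" by (simp add: power_mult)
  hence "CHAR('a) dvd p ^ (k*2)" using CHAR_dvd_card[where 'a='a] cardF pk by simp
  hence "CHAR('a) dvd p" using cpr prime_dvd_power by blast
  hence "CHAR('a) = p" using cpr pk(1) by (simp add: primes_dvd_imp_eq)
  then show ?thesis using freshmans_dream'[OF cpr, of q k] pk by simp
qed

definition n where "n = (q - 1) * (q + 1)"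

lemma q_ge: "q \<ge> 3" using q3 by (metis mod_less_eq_dividend)

lemma odd_q: "odd q" using q3 by presburger

lemma n_card: "card (UNIV :: 'a set) = n + 1"
proof -
  have "(q - 1) * (q + 1) + 1 = q^2" using q_ge
    by (simp add: power2_eq_square algebra_simps)
  then show ?thesis using cardF n_def by simp
qed

lemma n_pos: "n > 0" using q_ge by (simp add: n_def)

lemma w_nz: "w \<noteq> 0" using prim by (simp add: primitive_element_def)

lemma range_w: "range (\<lambda>k::nat. w ^ k) = UNIV - {0}" using prim by (simp add: primitive_element_def)

lemma card_nz: "card (UNIV - {0::'a}) = n" using n_card by (simp add: card_Diff_singleton)

lemma w_pow_n: "w ^ n = 1" and img_w: "(\<lambda>k. w ^ k) ` {..<n} = UNIV - {0}"
proof -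
  have "\<not> inj_on (\<lambda>k::nat. w ^ k) {..n}"
  proof
    assume inj: "inj_on (\<lambda>k::nat. w ^ k) {..n}"
    have "card ((\<lambda>k::nat. w ^ k) ` {..n}) = n + 1" using card_image[OF inj] by simp
    moreover have "(\<lambda>k::nat. w ^ k) ` {..n} \<subseteq> UNIV - {0}" using range_w by auto
    hence "card ((\<lambda>k::nat. w ^ k) ` {..n}) \<le> n" using card_mono[of "UNIV - {0::'a}"] card_nz by auto
    ultimately show False by simp
  qed
  then obtain i j where ij: "i \<le> n" "j \<le> n" "i \<noteq> j" "w ^ i = w ^ j" unfolding inj_on_def by auto
  obtain a b where ab: "a < b" "b \<le> n" "w ^ a = w ^ b"
    using ij by (metis linorder_neqE_nat)
  define oo where "oo = b - a"
  have opos: "0 < oo" "oo \<le> n" using ab by (auto simp: oo_def)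
  have "b = a + oo" using ab by (simp add: oo_def)
  hence "w ^ b = w ^ a * w ^ oo" by (simp add: power_add)
  hence wo: "w ^ oo = 1" using ab w_nz by simp
  have pm: "w ^ k = w ^ (k mod oo)" for k
  proof -
    have "k = oo * (k div oo) + k mod oo" by simp
    hence "w ^ k = w ^ (oo * (k div oo) + k mod oo)" by metis
    also have "\<dots> = w ^ (k mod oo)" unfolding power_add power_mult wo by simp
    finally show ?thesis .
  qed
  have sub: "UNIV - {0} \<subseteq> (\<lambda>k. w ^ k) ` {..<oo}"
  proof
    fix y :: 'a assume "y \<in> UNIV - {0}"
    then obtain k where "y = w ^ k" using range_w by (metis rangeE)
    then show "y \<in> (\<lambda>k. w ^ k) ` {..<oo}" using pm[of k] opos by auto
  qed
  have "n \<le> card ((\<lambda>k. w ^ k) ` {..<oo})" using card_mono[OF _ sub] card_nz by simp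
  also have "\<dots> \<le> oo" using card_image_le[of "{..<oo}"] by simp
  finally have "oo = n" using opos by simp
  then show "w ^ n = 1" using wo by simp
  show "(\<lambda>k. w ^ k) ` {..<n} = UNIV - {0}" using sub \<open>oo = n\<close> range_w by auto
qed

lemma inj_w: "inj_on (\<lambda>k. w ^ k) {..<n}"
  by (rule eq_card_imp_inj_on) (use img_w card_nz in simp_all)

lemma w_pow_mod: "w ^ k = w ^ (k mod n)"
proof -
  have "k = n * (k div n) + k mod n" by simp
  hence "w ^ k = w ^ (n * (k div n) + k mod n)" by metis
  also have "\<dots> = w ^ (k mod n)" unfolding power_add power_mult w_pow_n by simp
  finally show ?thesis .
qed

lemma w_pow_eq: "w ^ i = w ^ j \<longleftrightarrow> i mod n = j mod n"
proof
  assume "w ^ i = w ^ j"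
  hence "w ^ (i mod n) = w ^ (j mod n)" using w_pow_mod by metis
  then show "i mod n = j mod n" using inj_w n_pos by (auto simp: inj_on_def)
next
  assume "i mod n = j mod n" then show "w ^ i = w ^ j" using w_pow_mod by metis
qed

definition ex :: "'a \<Rightarrow> nat" where "ex a = inv_into {..<n} (\<lambda>k. w ^ k) a"

lemma ex: assumes "a \<noteq> 0" shows "ex a < n" "w ^ ex a = a"
proof -
  have "a \<in> (\<lambda>k. w ^ k) ` {..<n}" using img_w assms by auto
  then show "ex a < n" "w ^ ex a = a" unfolding ex_def
    using inv_into_into[of a "\<lambda>k. w ^ k" "{..<n}"] f_inv_into_f[of a "\<lambda>k. w ^ k" "{..<n}"] by auto
qed

lemma ex_pow: "ex (w ^ i) = i mod n"
proof -
  have nz: "w ^ i \<noteq> 0" using w_nz by simp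
  have "w ^ ex (w ^ i) = w ^ i" using ex(2)[OF nz] .
  hence "ex (w ^ i) mod n = i mod n" using w_pow_eq by blast
  then show ?thesis using ex(1)[OF nz] by simp
qed

lemma w_pow_nz: "w ^ i \<noteq> 0" using w_nz by simp

definition t where "t = (q + 1) div 4"

lemma qt: "q + 1 = 4 * t" using q3 unfolding t_def by presburger

lemma t_pos: "t \<ge> 1" using qt by simp

lemma n_t: "n = (4*t - 2) * (4*t)" using qt unfolding n_def
  by (metis add_diff_cancel_right' diff_diff_left one_add_one)

lemma four_dvd_n: "4 dvd n" using n_t by simp

lemma half_n: "n div 2 = 4 * ((2*t - 1) * t)" and four_dvd_half: "4 dvd n div 2"
proof -
  have "n = 2 * (4 * ((2*t - 1) * t))" using n_t t_pos by (simp add: algebra_simps right_diff_distrib')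
  then show "n div 2 = 4 * ((2*t - 1) * t)" by simp
  then show "4 dvd n div 2" by simp
qed

lemma cyc_mem: assumes "r < 4" shows "a \<in> cyc_class 4 w r \<longleftrightarrow> a \<noteq> 0 \<and> ex a mod 4 = r"
proof
  assume "a \<in> cyc_class 4 w r"
  then obtain k where k: "a = w ^ r * (w ^ 4) ^ k" unfolding cyc_class_def by auto
  hence a: "a = w ^ (r + 4 * k)" by (simp add: power_add power_mult)
  hence "ex a = (r + 4*k) mod n" using ex_pow by simp
  hence "ex a mod 4 = (r + 4*k) mod 4" using four_dvd_n by (simp add: mod_mod_cancel)
  then show "a \<noteq> 0 \<and> ex a mod 4 = r" using a assms w_nz by simp
next
  assume h: "a \<noteq> 0 \<and> ex a mod 4 = r"
  have "ex a = 4 * (ex a div 4) + ex a mod 4" by simp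
  hence "ex a = r + 4 * (ex a div 4)" using h by linarith
  hence "a = w ^ (r + 4 * (ex a div 4))" using ex(2) h by metis
  hence "a = w ^ r * (w ^ 4) ^ (ex a div 4)" by (simp add: power_add power_mult)
  then show "a \<in> cyc_class 4 w r" unfolding cyc_class_def by auto
qed

lemma D2_mem: "a \<in> Dset w 2 \<longleftrightarrow> a \<noteq> 0 \<and> ex a mod 4 \<in> {2,3}"
proof -
  have c2: "a \<in> cyc_class 4 w 2 \<longleftrightarrow> a \<noteq> 0 \<and> ex a mod 4 = 2" by (rule cyc_mem) simp
  have c3: "a \<in> cyc_class 4 w 3 \<longleftrightarrow> a \<noteq> 0 \<and> ex a mod 4 = 3" by (rule cyc_mem) simp
  have "Dset w 2 = cyc_class 4 w 2 \<union> cyc_class 4 w 3" by (simp add: Dset_def)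
  then show ?thesis using c2 c3 by blast
qed

lemma D0_mem: "a \<in> Dset w 0 \<longleftrightarrow> a \<noteq> 0 \<and> a \<notin> Dset w 2"
proof -
  have c0: "a \<in> cyc_class 4 w 0 \<longleftrightarrow> a \<noteq> 0 \<and> ex a mod 4 = 0" by (rule cyc_mem) simp
  have c1: "a \<in> cyc_class 4 w 1 \<longleftrightarrow> a \<noteq> 0 \<and> ex a mod 4 = 1" by (rule cyc_mem) simp
  have "Dset w 0 = cyc_class 4 w 0 \<union> cyc_class 4 w 1" by (simp add: Dset_def)
  moreover have "ex a mod 4 = 0 \<or> ex a mod 4 = 1 \<or> ex a mod 4 = 2 \<or> ex a mod 4 = 3" by presburger
  ultimately show ?thesis using c0 c1 D2_mem[of a] by fastforce
qed

lemma w_half: "w ^ (n div 2) = -1"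
proof -
  have "(w ^ (n div 2)) * (w ^ (n div 2)) = w ^ n"
  proof -
    have "n div 2 + n div 2 = n" using four_dvd_n by auto
    then show ?thesis by (metis power_add)
  qed
  hence "w ^ (n div 2) = 1 \<or> w ^ (n div 2) = -1" using w_pow_n square_eq_1_iff by metis
  moreover have "w ^ (n div 2) \<noteq> 1"
  proof
    assume "w ^ (n div 2) = 1"
    hence "w ^ (n div 2) = w ^ 0" by simp
    hence "(n div 2) mod n = 0" using w_pow_eq[of "n div 2" 0] by simp
    moreover have "0 < n div 2" "n div 2 < n" using four_dvd_n n_pos by auto
    ultimately show False by simp
  qed
  ultimately show ?thesis by simp
qed

lemma D2_neg: "- a \<in> Dset w 2 \<longleftrightarrow> a \<in> Dset w 2"
proof (cases "a = 0")
  case True then show ?thesis by simp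
next
  case False
  have "- a = w ^ (ex a + n div 2)" using ex(2)[OF False] w_half by (simp add: power_add)
  hence "ex (-a) = (ex a + n div 2) mod n" using ex_pow by simp
  hence "ex (-a) mod 4 = (ex a + n div 2) mod 4" using four_dvd_n by (simp add: mod_mod_cancel)
  also have "\<dots> = ex a mod 4" using half_n by simp
  finally show ?thesis using False D2_mem by simp
qed

definition dir where "dir a = ex a mod (q + 1)"

lemma dir_lt: "dir a < q + 1" by (simp add: dir_def)

lemma D2_dir: "a \<in> Dset w 2 \<longleftrightarrow> a \<noteq> 0 \<and> dir a mod 4 \<in> {2,3}"
proof -
  have "4 dvd q + 1" using qt by simp
  then have "dir a mod 4 = ex a mod 4" by (simp add: dir_def mod_mod_cancel)
  then show ?thesis using D2_mem by simp
qed

lemma pow_dir: assumes "a \<noteq> 0" "b \<noteq> 0" shows "a ^ (q-1) = b ^ (q-1) \<longleftrightarrow> dir a = dir b"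
proof -
  have "a ^ (q-1) = w ^ (ex a * (q-1))" using ex(2)[OF assms(1)] by (metis power_mult)
  moreover have "b ^ (q-1) = w ^ (ex b * (q-1))" using ex(2)[OF assms(2)] by (metis power_mult)
  ultimately have "a ^ (q-1) = b ^ (q-1) \<longleftrightarrow> (ex a * (q-1)) mod n = (ex b * (q-1)) mod n"
    using w_pow_eq by simp
  also have nn: "n = (q+1)*(q-1)" by (simp add: n_def mult.commute)
  also have "(ex a * (q-1)) mod ((q+1)*(q-1)) = (ex a mod (q+1)) * (q-1)" by (rule mod_mult_mult2)
  also have "(ex b * (q-1)) mod ((q+1)*(q-1)) = (ex b mod (q+1)) * (q-1)" by (rule mod_mult_mult2)
  also have "((ex a mod (q+1)) * (q-1) = (ex b mod (q+1)) * (q-1)) \<longleftrightarrow> dir a = dir b"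
    using q_ge by (simp add: dir_def)
  finally show ?thesis .
qed

definition Kp :: "'a \<Rightarrow> bool" where "Kp z \<longleftrightarrow> z ^ q = z"

lemma Kp_dir: assumes "a \<noteq> 0" "b \<noteq> 0" shows "Kp (a / b) \<longleftrightarrow> dir a = dir b"
proof -
  have q: "q = Suc (q - 1)" using q_ge by simp
  have nz: "a / b \<noteq> 0" using assms by simp
  have "Kp (a / b) \<longleftrightarrow> (a/b) * (a/b)^(q-1) = (a/b) * 1" unfolding Kp_def by (subst q) simp
  also have "\<dots> \<longleftrightarrow> (a/b)^(q-1) = 1" using nz by simp
  also have "\<dots> \<longleftrightarrow> a^(q-1) = b^(q-1)" using assms by (simp add: power_divide)
  finally show ?thesis using pow_dir assms by simp
qed

lemma Kp_add: "Kp u \<Longrightarrow> Kp v \<Longrightarrow> Kp (u + v)" by (simp add: Kp_def frob)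
lemma Kp_neg: "Kp u \<Longrightarrow> Kp (- u)" using odd_q by (simp add: Kp_def)
lemma Kp_diff: "Kp u \<Longrightarrow> Kp v \<Longrightarrow> Kp (u - v)" using Kp_add[of u "-v"] Kp_neg by simp
lemma Kp_mult: "Kp u \<Longrightarrow> Kp v \<Longrightarrow> Kp (u * v)" by (simp add: Kp_def power_mult_distrib)
lemma Kp_div: "Kp u \<Longrightarrow> Kp v \<Longrightarrow> Kp (u / v)" by (simp add: Kp_def power_divide)
lemma Kp_1: "Kp 1" by (simp add: Kp_def)

lemma nz_set: "{a. a \<noteq> 0 \<and> P (ex a)} = (\<lambda>k. w ^ k) ` {k. k < n \<and> P k}"
proof (intro equalityI subsetI)
  fix a assume "a \<in> {a. a \<noteq> 0 \<and> P (ex a)}"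
  then show "a \<in> (\<lambda>k. w ^ k) ` {k. k < n \<and> P k}" using ex by (auto intro!: image_eqI[of a _ "ex a"])
next
  fix a assume "a \<in> (\<lambda>k. w ^ k) ` {k. k < n \<and> P k}"
  then obtain k where "k < n" "P k" "a = w ^ k" by auto
  then show "a \<in> {a. a \<noteq> 0 \<and> P (ex a)}" using ex_pow w_nz by simp
qed

lemma card_nz_set: "card {a. a \<noteq> 0 \<and> P (ex a)} = card {k. k < n \<and> P k}"
  unfolding nz_set by (rule card_image) (rule inj_on_subset[OF inj_w], auto)

lemma nn: "n = (q+1) * (q-1)" by (simp add: n_def mult.commute)

lemma fiber: assumes "r < q + 1" shows "card {a. a \<noteq> 0 \<and> dir a = r} = q - 1"
proof -
  have "card {a. a \<noteq> 0 \<and> dir a = r} = card {k. k < (q+1)*(q-1) \<and> k mod (q+1) \<in> {r}}"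
    using card_nz_set[of "\<lambda>k. k mod (q+1) = r"] by (simp add: dir_def nn)
  also have "\<dots> = (q - 1) * card {r}" by (rule card_mod_count) (use assms in auto)
  finally show ?thesis by simp
qed

lemma card_D2: "card (Dset w 2) = n div 2"
proof -
  have "Dset w 2 = {a. a \<noteq> 0 \<and> ex a mod 4 \<in> {2,3}}" using D2_mem by auto
  hence "card (Dset w 2) = card {k. k < 4 * (n div 4) \<and> k mod 4 \<in> {2,3}}"
    using card_nz_set[of "\<lambda>k. k mod 4 \<in> {2,3}"] four_dvd_n by simp
  also have "\<dots> = (n div 4) * card {2,3::nat}" by (rule card_mod_count) auto
  finally show ?thesis using four_dvd_n by auto
qed

definition S where "S = {d. d < q + 1 \<and> d mod 4 \<in> {2,3}}"

lemma card_S: "card S = 2 * t"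
proof -
  have "card S = card {d. d < 4 * t \<and> d mod 4 \<in> {2,3}}" unfolding S_def qt by simp
  also have "\<dots> = t * card {2,3::nat}" by (rule card_mod_count) auto
  finally show ?thesis by simp
qed

lemma D2_S: "a \<in> Dset w 2 \<longleftrightarrow> a \<noteq> 0 \<and> dir a \<in> S"
  using D2_dir dir_lt by (auto simp: S_def)

lemma q_sq: "n + 1 = q * q" using n_card cardF by (simp add: power2_eq_square)

context
  fixes x :: 'a assumes x: "x \<noteq> 0"
begin

definition Dom where "Dom = {a. a \<noteq> 0 \<and> dir a \<noteq> dir x}"
definition Phi where "Phi a = (dir a, dir (a - x))"
definition T where "T = {..<q+1} - {dir x}"
definition C where "C = {p. fst p \<in> T \<and> snd p \<in> T \<and> fst p \<noteq> snd p}"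

lemma dom_props: assumes "a \<in> Dom"
  shows "a - x \<noteq> 0" "dir (a - x) \<noteq> dir x" "dir a \<noteq> dir (a - x)"
proof -
  have a: "a \<noteq> 0" "dir a \<noteq> dir x" using assms by (auto simp: Dom_def)
  show ax: "a - x \<noteq> 0" using a by auto
  show "dir (a - x) \<noteq> dir x"
  proof
    assume "dir (a - x) = dir x"
    hence "Kp ((a - x) / x)" using Kp_dir ax x by blast
    hence "Kp ((a - x) / x + 1)" using Kp_add Kp_1 by blast
    moreover have "(a - x) / x + 1 = a / x" using x by (simp add: field_simps)
    ultimately have "dir a = dir x" using Kp_dir a x by simp
    then show False using a by simp
  qed
  show "dir a \<noteq> dir (a - x)"
  proof
    assume "dir a = dir (a - x)"
    hence "Kp (a / (a - x))" using Kp_dir ax a by blast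
    hence "Kp (1 - 1 / (a / (a - x)))" using Kp_diff Kp_div Kp_1 by blast
    moreover have "1 - 1 / (a / (a - x)) = x / a" using a ax by (simp add: field_simps)
    ultimately have "dir x = dir a" using Kp_dir a x by simp
    then show False using a by simp
  qed
qed

lemma Phi_inj: "inj_on Phi Dom"
proof (rule inj_onI)
  fix a b assume a: "a \<in> Dom" and b: "b \<in> Dom" and eq: "Phi a = Phi b"
  have a0: "a \<noteq> 0" "dir a \<noteq> dir x" using a by (auto simp: Dom_def)
  have b0: "b \<noteq> 0" using b by (auto simp: Dom_def)
  have ax: "a - x \<noteq> 0" and bx: "b - x \<noteq> 0" using dom_props a b by auto
  define c where "c = b / a"
  define e where "e = (b - x) / (a - x)"
  have Kc: "Kp c" unfolding c_def using Kp_dir a0 b0 eq by (simp add: Phi_def)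
  have Ke: "Kp e" unfolding e_def using Kp_dir ax bx eq by (simp add: Phi_def)
  have bc: "b = c * a" using a0 by (simp add: c_def)
  have be: "b - x = e * (a - x)" using ax by (simp add: e_def)
  have key: "(c - e) * a = (1 - e) * x" using bc be by (simp add: algebra_simps)
  have "c = e"
  proof (rule ccontr)
    assume ne: "c \<noteq> e"
    hence "a / x = (1 - e) / (c - e)" using key x by (simp add: field_simps)
    moreover have "Kp ((1 - e) / (c - e))" using Kc Ke Kp_1 Kp_diff Kp_div by blast
    ultimately have "Kp (a / x)" by simp
    hence "dir a = dir x" using Kp_dir[OF a0(1) x] by simp
    then show False using a0 by simp
  qed
  hence "(1 - e) * x = 0" using key by simp
  hence "e = 1" using x by simp
  then show "a = b" using be by simp
qed

lemma card_Dom: "card Dom = q * q - q"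
proof -
  have "Dom = (UNIV - {0}) - {a. a \<noteq> 0 \<and> dir a = dir x}" by (auto simp: Dom_def)
  moreover have "card (UNIV - {0::'a} - {a. a \<noteq> 0 \<and> dir a = dir x}) = card (UNIV - {0::'a}) - card {a. a \<noteq> 0 \<and> dir a = dir x}"
    by (rule card_Diff_subset) auto
  ultimately have "card Dom = card (UNIV - {0::'a}) - card {a. a \<noteq> 0 \<and> dir a = dir x}"
    by simp
  also have "\<dots> = n - (q - 1)" using card_nz fiber[OF dir_lt] by simp
  finally show ?thesis using q_sq q_ge by (simp add: diff_mult_distrib)
qed

lemma card_C: "card C = q * q - q"
proof -
  have "card T = q" unfolding T_def using dir_lt[of x] by (simp add: card_Diff_singleton)
  then show ?thesis unfolding C_def using card_offdiag[of T] by (simp add: T_def)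
qed

lemma Phi_img: "Phi ` Dom = C"
proof (rule card_subset_eq)
  show "finite C" unfolding C_def by (rule finite_subset[of _ "T \<times> T"]) (auto simp: T_def)
  show "Phi ` Dom \<subseteq> C"
    using dom_props dir_lt by (auto simp: Phi_def C_def T_def Dom_def)
  show "card (Phi ` Dom) = card C" using card_image[OF Phi_inj] card_Dom card_C by simp
qed

lemma count_P: "card {a \<in> Dom. Phi a \<in> P} = card (C \<inter> P)"
proof -
  have "Phi ` {a \<in> Dom. Phi a \<in> P} = C \<inter> P"
  proof (intro equalityI subsetI)
    fix p assume "p \<in> Phi ` {a \<in> Dom. Phi a \<in> P}" then show "p \<in> C \<inter> P" using Phi_img by auto
  next
    fix p assume p: "p \<in> C \<inter> P"
    then obtain a where "a \<in> Dom" "p = Phi a" using Phi_img by (metis IntD1 imageE)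
    then show "p \<in> Phi ` {a \<in> Dom. Phi a \<in> P}" using p by auto
  qed
  moreover have "inj_on Phi {a \<in> Dom. Phi a \<in> P}" by (rule inj_on_subset[OF Phi_inj]) auto
  ultimately show ?thesis using card_image by metis
qed

lemma A2_eq: "{a \<in> Dom. Phi a \<in> S \<times> S} = {a. a \<in> Dset w 2 \<and> a - x \<in> Dset w 2 \<and> dir a \<noteq> dir x}"
proof (intro equalityI subsetI)
  fix a assume a: "a \<in> {a \<in> Dom. Phi a \<in> S \<times> S}"
  then have "a \<in> Dom" by simp
  then show "a \<in> {a. a \<in> Dset w 2 \<and> a - x \<in> Dset w 2 \<and> dir a \<noteq> dir x}"
    using a dom_props[of a] D2_S[of a] D2_S[of "a - x"] by (auto simp: Dom_def Phi_def)
next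
  fix a assume a: "a \<in> {a. a \<in> Dset w 2 \<and> a - x \<in> Dset w 2 \<and> dir a \<noteq> dir x}"
  then show "a \<in> {a \<in> Dom. Phi a \<in> S \<times> S}"
    using D2_S[of a] D2_S[of "a - x"] by (auto simp: Dom_def Phi_def)
qed

lemma card_A1: "card {a. a \<in> Dset w 2 \<and> a - x \<in> Dset w 2 \<and> dir a = dir x} = (if x \<in> Dset w 2 then q - 2 else 0)"
proof (cases "x \<in> Dset w 2")
  case False
  have "{a. a \<in> Dset w 2 \<and> a - x \<in> Dset w 2 \<and> dir a = dir x} = {}"
  proof (intro equalityI subsetI)
    fix a assume "a \<in> {a. a \<in> Dset w 2 \<and> a - x \<in> Dset w 2 \<and> dir a = dir x}"
    hence "a \<in> Dset w 2" "dir a = dir x" by auto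
    hence "x \<in> Dset w 2" using D2_S[of a] D2_S[of x] x by simp
    then show "a \<in> {}" using False by simp
  qed simp
  then show ?thesis using False by simp
next
  case True
  have eq: "{a. a \<in> Dset w 2 \<and> a - x \<in> Dset w 2 \<and> dir a = dir x} = {a. a \<noteq> 0 \<and> dir a = dir x} - {x}"
  proof (intro equalityI subsetI)
    fix a assume "a \<in> {a. a \<in> Dset w 2 \<and> a - x \<in> Dset w 2 \<and> dir a = dir x}"
    then show "a \<in> {a. a \<noteq> 0 \<and> dir a = dir x} - {x}" using D2_S[of a] D2_S[of "a - x"] by auto
  next
    fix a assume a: "a \<in> {a. a \<noteq> 0 \<and> dir a = dir x} - {x}"
    hence a0: "a \<noteq> 0" "dir a = dir x" "a \<noteq> x" by auto
    have ax: "a - x \<noteq> 0" using a0 by simp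
    have "Kp (a / x)" using Kp_dir[OF a0(1) x] a0 by simp
    hence "Kp (a / x - 1)" using Kp_diff Kp_1 by blast
    moreover have "a / x - 1 = (a - x) / x" using x by (simp add: field_simps)
    ultimately have "dir (a - x) = dir x" using Kp_dir[OF ax x] by simp
    then show "a \<in> {a. a \<in> Dset w 2 \<and> a - x \<in> Dset w 2 \<and> dir a = dir x}"
      using a0 ax True D2_S[of a] D2_S[of "a - x"] D2_S[of x] by auto
  qed
  have "card ({a. a \<noteq> 0 \<and> dir a = dir x} - {x}) = q - 1 - 1"
    using fiber[OF dir_lt[of x]] x by (simp add: card_Diff_singleton)
  then show ?thesis using eq True by simp
qed

lemma C_S: "C \<inter> (S \<times> S) = {p. fst p \<in> S - {dir x} \<and> snd p \<in> S - {dir x} \<and> fst p \<noteq> snd p}"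
  by (auto simp: C_def T_def S_def)

lemma N2_nat: "card {a. a \<in> Dset w 2 \<and> a - x \<in> Dset w 2} =
   (if x \<in> Dset w 2 then q - 2 else 0) + (card (S - {dir x}) * card (S - {dir x}) - card (S - {dir x}))"
proof -
  have u: "{a. a \<in> Dset w 2 \<and> a - x \<in> Dset w 2} =
     {a. a \<in> Dset w 2 \<and> a - x \<in> Dset w 2 \<and> dir a = dir x} \<union> {a \<in> Dom. Phi a \<in> S \<times> S}"
    unfolding A2_eq by auto
  have fS: "finite (S - {dir x})" by (simp add: S_def)
  have "card {a. a \<in> Dset w 2 \<and> a - x \<in> Dset w 2} =
     card {a. a \<in> Dset w 2 \<and> a - x \<in> Dset w 2 \<and> dir a = dir x} + card {a \<in> Dom. Phi a \<in> S \<times> S}"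
    unfolding u by (rule card_Un_disjoint) (auto simp: A2_eq)
  also have "card {a \<in> Dom. Phi a \<in> S \<times> S} = card (C \<inter> (S \<times> S))" by (rule count_P)
  also have "\<dots> = card (S - {dir x}) * card (S - {dir x}) - card (S - {dir x})"
    unfolding C_S by (rule card_offdiag[OF fS])
  finally show ?thesis using card_A1 by simp
qed

lemma N2: "4 * int (card {a. a \<in> Dset w 2 \<and> a - x \<in> Dset w 2}) = int n - 4 * (if x \<in> Dset w 2 then 1 else 0)"
proof -
  obtain s where s: "t = Suc s" using t_pos by (cases t) auto
  have q: "q = 4 * s + 3" using qt s by simp
  have "n = (q - 1) * (q + 1)" by (rule n_def)
  also have "\<dots> = (4*s+2)*(4*s+4)" using q by simp
  finally have n: "n = (4*s+2)*(4*s+4)" .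
  have kk: "\<And>k::nat. k * k - k = k * (k - 1)" by (simp add: diff_mult_distrib2)
  have cS: "card S = 2*s + 2" using card_S s by simp
  have xS: "x \<in> Dset w 2 \<longleftrightarrow> dir x \<in> S" using D2_S x by simp
  show ?thesis
  proof (cases "x \<in> Dset w 2")
    case True
    have "card (S - {dir x}) = 2*s+1" using cS xS True by (simp add: S_def card_Diff_singleton)
    hence "card {a. a \<in> Dset w 2 \<and> a - x \<in> Dset w 2} = 4*s+1 + (2*s+1)*(2*s)"
      using N2_nat True q kk by simp
    then have "4 * int (card {a. a \<in> Dset w 2 \<and> a - x \<in> Dset w 2}) = 4 * (4*int s+1 + (2*int s+1)*(2*int s))"
      by (simp add: algebra_simps)
    also have "\<dots> = (4*int s+2)*(4*int s+4) - 4" by (simp add: algebra_simps)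
    also have "\<dots> = int n - 4" using n by (simp add: algebra_simps)
    finally show ?thesis using True by simp
  next
    case False
    have "card (S - {dir x}) = 2*s+2" using cS xS False by simp
    hence "card {a. a \<in> Dset w 2 \<and> a - x \<in> Dset w 2} = (2*s+2)*(2*s+1)"
      using N2_nat False q kk by simp
    then have "4 * int (card {a. a \<in> Dset w 2 \<and> a - x \<in> Dset w 2}) = 4 * ((2*int s+2)*(2*int s+1))"
      by (simp add: algebra_simps)
    also have "\<dots> = (4*int s+2)*(4*int s+4)" by (simp add: algebra_simps)
    also have "\<dots> = int n" using n by (simp add: algebra_simps)
    finally show ?thesis using False by simp
  qed
qed

end

definition dd :: "'a \<Rightarrow> int" where "dd y = (if y \<in> Dset w 2 then 1 else 0)"
definition zz :: "'a \<Rightarrow> int" where "zz y = (if y = 0 then 1 else 0)"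
definition NN :: "'a \<Rightarrow> int" where "NN x = int (card {a. a \<in> Dset w 2 \<and> a - x \<in> Dset w 2})"
definition QQ :: int where "QQ = int (card (UNIV :: 'a set))"
definition HH :: int where "HH = int (n div 2)"

lemma sum_shift: "(\<Sum>y\<in>UNIV. f (y - x)) = (\<Sum>y\<in>(UNIV::'a set). f y)" for f :: "'a \<Rightarrow> int"
proof -
  have "bij_betw (\<lambda>y. y - x) (UNIV::'a set) UNIV" by (rule bij_betwI[where g="\<lambda>y. y + x"]) auto
  then show ?thesis by (rule sum.reindex_bij_betw)
qed

lemma sum_count: "(\<Sum>y\<in>(UNIV::'a set). if P y then 1 else 0 :: int) = int (card {y. P y})"
  by (simp add: sum.If_cases)

lemma sum_z: "(\<Sum>y\<in>UNIV. zz y * f y) = f 0" for f :: "'a \<Rightarrow> int"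
proof -
  have "(\<Sum>y\<in>UNIV. zz y * f y) = (\<Sum>y\<in>UNIV. if y = 0 then f y else 0)" by (rule sum.cong) (auto simp: zz_def)
  then show ?thesis by simp
qed

lemma sum_z': "(\<Sum>y\<in>UNIV. f y * zz (y - x)) = f x" for f :: "'a \<Rightarrow> int"
proof -
  have "(\<Sum>y\<in>UNIV. f y * zz (y - x)) = (\<Sum>y\<in>UNIV. if y = x then f y else 0)" by (rule sum.cong) (auto simp: zz_def)
  then show ?thesis by simp
qed

lemma sum_1: "(\<Sum>y\<in>(UNIV::'a set). (1::int)) = QQ" by (simp add: QQ_def)
lemma sum_zs: "(\<Sum>y\<in>UNIV. zz (y - x)) = 1" using sum_shift[of zz x] sum_z[of "\<lambda>_. 1"] by simp
lemma sum_zz: "(\<Sum>y\<in>UNIV. zz y) = 1" using sum_z[of "\<lambda>_. 1"] by simp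
lemma sum_d: "(\<Sum>y\<in>UNIV. dd y) = HH"
  using sum_count[of "\<lambda>y. y \<in> Dset w 2"] card_D2 by (simp add: dd_def HH_def)
lemma sum_ds: "(\<Sum>y\<in>UNIV. dd (y - x)) = HH" using sum_shift[of dd x] sum_d by simp
lemma sum_dd: "(\<Sum>y\<in>UNIV. dd y * dd (y - x)) = NN x"
proof -
  have "(\<Sum>y\<in>UNIV. dd y * dd (y - x)) = (\<Sum>y\<in>UNIV. if y \<in> Dset w 2 \<and> y - x \<in> Dset w 2 then 1 else 0)"
    by (rule sum.cong) (auto simp: dd_def)
  also have "\<dots> = NN x" using sum_count[of "\<lambda>y. y \<in> Dset w 2 \<and> y - x \<in> Dset w 2"] by (simp add: NN_def)
  finally show ?thesis .
qed
lemma dd_neg: "dd (- x) = dd x" using D2_neg by (simp add: dd_def)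
lemma zz_neg: "zz (- x) = zz x" by (simp add: zz_def)

lemma expand:
  "(\<Sum>y\<in>UNIV. (a1 + b1*zz y + c1*dd y) * (a2 + b2*zz (y-x) + c2*dd (y-x))) =
     a1*a2*QQ + a1*b2 + a1*c2*HH + b1*a2 + b1*b2*zz x + b1*c2*dd x + c1*a2*HH + c1*b2*dd x + c1*c2*NN x"
proof -
  have "(\<Sum>y\<in>UNIV. (a1 + b1*zz y + c1*dd y) * (a2 + b2*zz (y-x) + c2*dd (y-x))) =
    (\<Sum>y\<in>UNIV. (a1*a2)*1 + (a1*b2)*zz (y-x) + (a1*c2)*dd(y-x) + (b1*a2)*zz y + (b1*b2)*(zz y*zz (y-x))
       + (b1*c2)*(zz y*dd(y-x)) + (c1*a2)*dd y + (c1*b2)*(dd y*zz(y-x)) + (c1*c2)*(dd y*dd(y-x)))"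
    by (intro sum.cong refl) (simp add: algebra_simps)
  also have "\<dots> = (a1*a2)*(\<Sum>y\<in>(UNIV::'a set). 1) + (a1*b2)*(\<Sum>y\<in>UNIV. zz (y-x)) + (a1*c2)*(\<Sum>y\<in>UNIV. dd(y-x))
       + (b1*a2)*(\<Sum>y\<in>UNIV. zz y) + (b1*b2)*(\<Sum>y\<in>UNIV. zz y*zz (y-x))
       + (b1*c2)*(\<Sum>y\<in>UNIV. zz y*dd(y-x)) + (c1*a2)*(\<Sum>y\<in>UNIV. dd y) + (c1*b2)*(\<Sum>y\<in>UNIV. dd y*zz(y-x))
       + (c1*c2)*(\<Sum>y\<in>UNIV. dd y*dd(y-x))"
    by (simp only: sum.distrib sum_distrib_left[symmetric])
  also have "\<dots> = a1*a2*QQ + a1*b2 + a1*c2*HH + b1*a2 + b1*b2*zz x + b1*c2*dd x + c1*a2*HH + c1*b2*dd x + c1*c2*NN x"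
    using sum_z[of "\<lambda>y. zz (y - x)"] sum_z[of "\<lambda>y. dd (y - x)"] sum_z'[of dd x]
    by (simp add: sum_1 sum_zs sum_zz sum_d sum_ds sum_dd dd_neg zz_neg QQ_def)
  finally show ?thesis .
qed

definition cnt :: "('a \<Rightarrow> int) \<Rightarrow> ('a \<Rightarrow> int) \<Rightarrow> 'a \<Rightarrow> int" where
  "cnt f g x = (\<Sum>y\<in>UNIV. f y * g (y - x))"

lemma bit_neg1: "(-1 :: bit) = 1"
proof -
  have "(1::bit) + 1 = 0" by (metis bit_2_eq_0 one_add_one)
  then show ?thesis by (metis add_eq_0_iff2)
qed

lemma bit_UNIV: "(UNIV :: bit set) = {0, 1}" using bit_not_zero_iff by auto

lemma sum_pair: "(\<Sum>h\<in>(UNIV::('b::finite \<times> 'c::finite) set). f h) = (\<Sum>a\<in>UNIV. \<Sum>b\<in>UNIV. f (a,b))"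
  by (simp add: sum.cartesian_product UNIV_Times_UNIV[symmetric] del: UNIV_Times_UNIV)

lemma gm:
  fixes XX YY :: "'a set"
  shows "gr_mult (gr_set ({0::bit} \<times> XX \<union> {1} \<times> YY)) (gr_set (set_inv ({0::bit} \<times> XX \<union> {1} \<times> YY))) (e, x) =
    (if e = 0 then cnt (gr_set XX) (gr_set XX) x + cnt (gr_set YY) (gr_set YY) x
     else cnt (gr_set XX) (gr_set YY) x + cnt (gr_set YY) (gr_set XX) x)"
proof -
  define B where "B = {0::bit} \<times> XX \<union> {1} \<times> YY"
  have inv: "gr_set (set_inv B) g = gr_set B (- g)" for g
  proof -
    have "g \<in> uminus ` B \<longleftrightarrow> - g \<in> B" by force
    then show ?thesis by (simp add: gr_set_def set_inv_def)
  qed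
  have gs0: "gr_set B (0, y) = gr_set XX y" for y by (auto simp: B_def gr_set_def)
  have gs1: "gr_set B (1, y) = gr_set YY y" for y by (auto simp: B_def gr_set_def)
  have "gr_mult (gr_set B) (gr_set (set_inv B)) (e, x) = (\<Sum>h\<in>UNIV. gr_set B h * gr_set B (h - (e, x)))"
    by (simp add: gr_mult_def inv)
  also have "\<dots> = (\<Sum>e'\<in>UNIV. \<Sum>y\<in>UNIV. gr_set B (e', y) * gr_set B ((e', y) - (e, x)))"
    by (rule sum_pair)
  also have "\<dots> = (\<Sum>y\<in>UNIV. gr_set B (0, y) * gr_set B ((0, y) - (e, x))) + (\<Sum>y\<in>UNIV. gr_set B (1, y) * gr_set B ((1, y) - (e, x)))"
    by (simp add: bit_UNIV)
  also have "\<dots> = (if e = 0 then cnt (gr_set XX) (gr_set XX) x + cnt (gr_set YY) (gr_set YY) x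
     else cnt (gr_set XX) (gr_set YY) x + cnt (gr_set YY) (gr_set XX) x)"
  proof (cases "e = 0")
    case True then show ?thesis by (simp add: gs0 gs1 cnt_def)
  next
    case False
    hence "e = 1" using bit_not_zero_iff by blast
    then show ?thesis by (simp add: gs0 gs1 cnt_def bit_neg1)
  qed
  finally show ?thesis by (simp add: B_def)
qed

lemma cnt_expand:
  "cnt (\<lambda>y. a1 + b1*zz y + c1*dd y) (\<lambda>y. a2 + b2*zz y + c2*dd y) x =
     a1*a2*QQ + a1*b2 + a1*c2*HH + b1*a2 + b1*b2*zz x + b1*c2*dd x + c1*a2*HH + c1*b2*dd x + c1*c2*NN x"
  unfolding cnt_def by (rule expand)

lemma zero_notin_D2: "0 \<notin> Dset w 2" using D2_mem by simp

lemma gs_D0: "gr_set (Dset w 0) = (\<lambda>y. 1 + (-1)*zz y + (-1)*dd y)"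
proof (rule ext)
  fix y show "gr_set (Dset w 0) y = 1 + (-1)*zz y + (-1)*dd y"
    using D0_mem[of y] zero_notin_D2 by (cases "y = 0"; cases "y \<in> Dset w 2") (simp_all add: gr_set_def zz_def dd_def)
qed
lemma gs_Y0: "gr_set (UNIV - Dset w 0) = (\<lambda>y. 0 + 1*zz y + 1*dd y)"
proof (rule ext)
  fix y show "gr_set (UNIV - Dset w 0) y = 0 + 1*zz y + 1*dd y"
    using D0_mem[of y] zero_notin_D2 by (cases "y = 0"; cases "y \<in> Dset w 2") (simp_all add: gr_set_def zz_def dd_def)
qed
lemma gs_D2: "gr_set (Dset w 2) = (\<lambda>y. 0 + 0*zz y + 1*dd y)"
  by (auto simp: gr_set_def zz_def dd_def)

lemma QQ_n: "QQ = int n + 1" using n_card by (simp add: QQ_def)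
lemma HH_n: "2 * HH = int n" using four_dvd_n by (auto simp: HH_def)
lemma NN_0: "NN 0 = HH" using card_D2 by (simp add: NN_def HH_def)
lemma NN_x: "x \<noteq> 0 \<Longrightarrow> 4 * NN x = int n - 4 * dd x" using N2[of x] by (simp add: NN_def dd_def)

lemma main:
  "card ({0::bit} \<times> Dset w 0 \<union> {1} \<times> (UNIV - Dset w 0)) = q ^ 2 \<and>
   card ({0::bit} \<times> Dset w 2 \<union> {1} \<times> Dset w 2) = q ^ 2 - 1 \<and>
   gr_mult (gr_set ({0::bit} \<times> Dset w 0 \<union> {1} \<times> (UNIV - Dset w 0))) (gr_set (set_inv ({0::bit} \<times> Dset w 0 \<union> {1} \<times> (UNIV - Dset w 0))))
   + gr_mult (gr_set ({0::bit} \<times> Dset w 2 \<union> {1} \<times> Dset w 2)) (gr_set (set_inv ({0::bit} \<times> Dset w 2 \<union> {1} \<times> Dset w 2)))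
   = gr_lift 0 (gr_smult (int (q ^ 2) - 2) (gr_set (UNIV - {0}))
                      + gr_smult (2 * int (q ^ 2) - 1) (gr_set {0}))
         + gr_lift 1 (gr_smult 2 (gr_set (Dset w 0)) - gr_smult 2 (gr_set (Dset w 2))
                      + gr_smult (int (q ^ 2) - 1) (gr_set UNIV))"
proof (intro conjI)
  have c0: "card ({0::bit} \<times> Dset w 0 \<union> {1} \<times> (UNIV - Dset w 0)) = card (Dset w 0) + card (UNIV - Dset w 0)"
    by (subst card_Un_disjoint) (auto simp: card_cartesian_product)
  also have "\<dots> = card (UNIV :: 'a set)" using card_mono[of UNIV "Dset w 0"] by (simp add: card_Diff_subset)
  finally show "card ({0::bit} \<times> Dset w 0 \<union> {1} \<times> (UNIV - Dset w 0)) = q ^ 2" using cardF by simp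
  have "card ({0::bit} \<times> Dset w 2 \<union> {1} \<times> Dset w 2) = card (Dset w 2) + card (Dset w 2)"
    by (subst card_Un_disjoint) (auto simp: card_cartesian_product)
  also have "\<dots> = n" using card_D2 four_dvd_n by auto
  finally show "card ({0::bit} \<times> Dset w 2 \<union> {1} \<times> Dset w 2) = q ^ 2 - 1" using n_card cardF by simp
  have Q: "(int q) ^ 2 = QQ" using cardF by (simp add: QQ_def)
  show "gr_mult (gr_set ({0::bit} \<times> Dset w 0 \<union> {1} \<times> (UNIV - Dset w 0))) (gr_set (set_inv ({0::bit} \<times> Dset w 0 \<union> {1} \<times> (UNIV - Dset w 0))))
   + gr_mult (gr_set ({0::bit} \<times> Dset w 2 \<union> {1} \<times> Dset w 2)) (gr_set (set_inv ({0::bit} \<times> Dset w 2 \<union> {1} \<times> Dset w 2)))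
   = gr_lift 0 (gr_smult (int (q ^ 2) - 2) (gr_set (UNIV - {0}))
                      + gr_smult (2 * int (q ^ 2) - 1) (gr_set {0}))
         + gr_lift 1 (gr_smult 2 (gr_set (Dset w 0)) - gr_smult 2 (gr_set (Dset w 2))
                      + gr_smult (int (q ^ 2) - 1) (gr_set UNIV))" (is "?F = ?G")
  proof (rule ext)
    fix g :: "bit \<times> 'a"
    obtain e x where g: "g = (e, x)" by fastforce
    have D0x: "gr_set (Dset w 0) x = 1 - zz x - dd x" using gs_D0 by simp
    have D2x: "gr_set (Dset w 2) x = dd x" by (simp add: gr_set_def dd_def)
    have m0: "gr_mult (gr_set ({0::bit} \<times> Dset w 0 \<union> {1} \<times> (UNIV - Dset w 0))) (gr_set (set_inv ({0::bit} \<times> Dset w 0 \<union> {1} \<times> (UNIV - Dset w 0)))) (e, x) =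
      (if e = 0 then cnt (gr_set (Dset w 0)) (gr_set (Dset w 0)) x + cnt (gr_set (UNIV - Dset w 0)) (gr_set (UNIV - Dset w 0)) x
       else cnt (gr_set (Dset w 0)) (gr_set (UNIV - Dset w 0)) x + cnt (gr_set (UNIV - Dset w 0)) (gr_set (Dset w 0)) x)"
      by (rule gm)
    have m1: "gr_mult (gr_set ({0::bit} \<times> Dset w 2 \<union> {1} \<times> Dset w 2)) (gr_set (set_inv ({0::bit} \<times> Dset w 2 \<union> {1} \<times> Dset w 2))) (e, x) =
      (if e = 0 then cnt (gr_set (Dset w 2)) (gr_set (Dset w 2)) x + cnt (gr_set (Dset w 2)) (gr_set (Dset w 2)) x
       else cnt (gr_set (Dset w 2)) (gr_set (Dset w 2)) x + cnt (gr_set (Dset w 2)) (gr_set (Dset w 2)) x)"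
      by (rule gm)
    have c00: "cnt (gr_set (Dset w 0)) (gr_set (Dset w 0)) x = QQ - 1 - HH - 1 + zz x + dd x - HH + dd x + NN x"
      unfolding gs_D0 cnt_expand by simp
    have cyy: "cnt (gr_set (UNIV - Dset w 0)) (gr_set (UNIV - Dset w 0)) x = zz x + dd x + dd x + NN x"
      unfolding gs_Y0 cnt_expand by simp
    have c0y: "cnt (gr_set (Dset w 0)) (gr_set (UNIV - Dset w 0)) x = 1 + HH - zz x - dd x - dd x - NN x"
      unfolding gs_D0 gs_Y0 cnt_expand by simp
    have cy0: "cnt (gr_set (UNIV - Dset w 0)) (gr_set (Dset w 0)) x = 1 - zz x - dd x + HH - dd x - NN x"
      unfolding gs_D0 gs_Y0 cnt_expand by simp
    have c22: "cnt (gr_set (Dset w 2)) (gr_set (Dset w 2)) x = NN x"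
      unfolding gs_D2 cnt_expand by simp
    have Lg: "(gr_mult (gr_set ({0::bit} \<times> Dset w 0 \<union> {1} \<times> (UNIV - Dset w 0))) (gr_set (set_inv ({0::bit} \<times> Dset w 0 \<union> {1} \<times> (UNIV - Dset w 0))))
   + gr_mult (gr_set ({0::bit} \<times> Dset w 2 \<union> {1} \<times> Dset w 2)) (gr_set (set_inv ({0::bit} \<times> Dset w 2 \<union> {1} \<times> Dset w 2)))) g
      = (if e = 0 then (QQ - 1 - HH - 1 + zz x + dd x - HH + dd x + NN x) + (zz x + dd x + dd x + NN x) + 2 * NN x
         else (1 + HH - zz x - dd x - dd x - NN x) + (1 - zz x - dd x + HH - dd x - NN x) + 2 * NN x)"
      unfolding g plus_fun_def m0 m1 c00 cyy c0y cy0 c22 by simp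
    have Rg: "(gr_lift 0 (gr_smult (int (q ^ 2) - 2) (gr_set (UNIV - {0}))
                      + gr_smult (2 * int (q ^ 2) - 1) (gr_set {0}))
         + gr_lift 1 (gr_smult 2 (gr_set (Dset w 0)) - gr_smult 2 (gr_set (Dset w 2))
                      + gr_smult (int (q ^ 2) - 1) (gr_set UNIV))) g
         = (if e = 0 then (if x = 0 then 2 * QQ - 1 else QQ - 2) else 2 * (1 - zz x - dd x) - 2 * dd x + (QQ - 1))"
    proof (cases "e = 0")
      case True then show ?thesis unfolding g by (simp add: gr_lift_def gr_smult_def gr_set_def plus_fun_def Q)
    next
      case False
      hence e1: "e = 1" using bit_not_zero_iff by blast
      show ?thesis unfolding g using e1 D0x D2x by (simp add: gr_lift_def gr_smult_def plus_fun_def fun_diff_def Q gr_set_def[of UNIV])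
    qed
    show "?F g = ?G g"
    proof (cases "x = 0")
      case True
      then show ?thesis unfolding Lg Rg
        using NN_0 QQ_n HH_n zero_notin_D2 by (simp add: zz_def dd_def)
    next
      case False
      then show ?thesis unfolding Lg Rg
        using NN_x[OF False] QQ_n HH_n by (simp add: zz_def)
    qed
  qed
qed

end

theorem proposition2p2:
  fixes q :: nat and w :: "'a::{field,finite}"
  assumes "primepow q" and "q mod 4 = 3" and "card (UNIV :: 'a set) = q ^ 2"
    and "primitive_element w"
  defines "B0 \<equiv> ({0} \<times> Dset w 0) \<union> ({1} \<times> (UNIV - Dset w 0))"
    and "B1 \<equiv> ({0} \<times> Dset w 2) \<union> ({1} \<times> Dset w 2)"
  shows "card B0 = q ^ 2 \<and> card B1 = q ^ 2 - 1 \<and>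
         gr_mult (gr_set B0) (gr_set (set_inv B0)) + gr_mult (gr_set B1) (gr_set (set_inv B1))
         = gr_lift 0 (gr_smult (int (q ^ 2) - 2) (gr_set (UNIV - {0}))
                      + gr_smult (2 * int (q ^ 2) - 1) (gr_set {0}))
         + gr_lift 1 (gr_smult 2 (gr_set (Dset w 0)) - gr_smult 2 (gr_set (Dset w 2))
                      + gr_smult (int (q ^ 2) - 1) (gr_set UNIV))"
proof -
  interpret ctx q w by unfold_locales fact+
  show ?thesis unfolding B0_def B1_def by (rule main)
qed

end
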